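(* Let $f$ be a scoring rule on a finite candidate set $C$ with $|C|=m$. Then $f$ is neutral and consistent with linearity if and only if $f$ is induced by a cost function $\mathrm{cost}_f$ such that: (1) for all ballots $A$ and axes $\triangleleft$, $\mathrm{cost}_f(A,\triangleleft)\ge 0$, and $\mathrm{cost}_f(A,\triangleleft)=0$ if and only if $A$ is an interval of $\triangleleft$; (2) for all $A$ and $\triangleleft$, $\mathrm{cost}_f(A,\triangleleft)=\mathrm{cost}_f(A,\overleftarrow{\triangleleft})$; (3) there is a function $g:\{0,1\}^m\to\mathbb R_{\ge0}$ such that for all $A$ and $\triangleleft$, $\mathrm{cost}_f(A,\triangleleft)=g(x_{A,\triangleleft})=g(x_{A,\overleftarrow{\triangleleft}})$.
   Context: Let $C$ be a finite set of $m$ candidates. An approval ballot is a nonempty subset $A\subseteq C$. A profile $P$ is a finite sequence (multiset) of approval ballots. An axis is a strict linear order $\triangleleft$ on $C$; $\overleftarrow{\triangleleft}$ denotes the reverse order; $\mathcal A$ is the set of all axes on $C$. A ballot $A$ is an interval of $\triangleleft$ if for all $a,b\in A$ and every $c$ with $a\triangleleft c\triangleleft b$ we have $c\in A$. A profile is linear if some axis makes all of its ballots intervals; $\mathrm{con}(P)$ is the set of such axes. An axis rule $f$ maps each profile $P$ to a nonempty set $f(P)\subseteq\mathcal A$ such that $\triangleleft\in f(P)$ implies $\overleftarrow{\triangleleft}\in f(P)$. A scoring rule is an axis rule for which there is a cost function $\mathrm{cost}:(2^C\setminus\{\emptyset\})\times\mathcal A\to\mathbb R_{\ge0}$ with $f(P)=\arg\min_{\triangleleft\in\mathcal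 A}\sum_{A\in P}\mathrm{cost}(A,\triangleleft)$ for every profile $P$; we then say $f$ is induced by this cost function. If $\triangleleft=c_1c_2\cdots c_m$ (i.e. $c_1\triangleleft c_2\triangleleft\cdots\triangleleft c_m$), the approval vector $x_{A,\triangleleft}\in\{0,1\}^m$ has $i$-th entry $1$ iff $c_i\in A$. $f$ is neutral if for every permutation $\pi$ of $C$ and every profile $P$, $f(\pi(P))=\pi(f(P))$, where $\pi$ acts on ballots elementwise and on axes by renaming candidates. $f$ is consistent with linearity if $f(P)=\mathrm{con}(P)$ for every linear profile $P$. *)

theory Defs
  imports Complex_Main
begin

text \<open>Candidates are the elements of a finite type 'a (so C = UNIV, m = CARD('a)).
An axis c1 c2 ... cm is represented by a list enumerating all candidates exactly once;
c_i precedes c_j on the axis iff i < j. The reverse axis is rev.\<close>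

definition axes :: "'a::finite list set" where
  "axes = {xs. distinct xs \<and> set xs = UNIV}"

definition ballot :: "'a set \<Rightarrow> bool" where
  "ballot A \<longleftrightarrow> A \<noteq> {}"

definition profile :: "'a set list \<Rightarrow> bool" where
  "profile P \<longleftrightarrow> (\<forall>A\<in>set P. ballot A)"

definition before :: "'a list \<Rightarrow> 'a \<Rightarrow> 'a \<Rightarrow> bool" where
  "before ax a b \<longleftrightarrow> (\<exists>i j. i < j \<and> j < length ax \<and> ax ! i = a \<and> ax ! j = b)"

definition is_interval :: "'a set \<Rightarrow> 'a list \<Rightarrow> bool" where
  "is_interval A ax \<longleftrightarrow>
     (\<forall>a\<in>A. \<forall>b\<in>A. \<forall>c. before ax a c \<and> before ax c b \<longrightarrow> c \<in> A)"

definition con :: "'a::finite set list \<Rightarrow> 'a list set" where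
  "con P = {ax \<in> axes. \<forall>A\<in>set P. is_interval A ax}"

definition linear_profile :: "'a::finite set list \<Rightarrow> bool" where
  "linear_profile P \<longleftrightarrow> con P \<noteq> {}"

definition axis_rule :: "('a::finite set list \<Rightarrow> 'a list set) \<Rightarrow> bool" where
  "axis_rule f \<longleftrightarrow> (\<forall>P. profile P \<longrightarrow>
      f P \<subseteq> axes \<and> f P \<noteq> {} \<and> (\<forall>ax\<in>f P. rev ax \<in> f P))"

definition total_cost :: "('a set \<Rightarrow> 'a list \<Rightarrow> real) \<Rightarrow> 'a set list \<Rightarrow> 'a list \<Rightarrow> real" where
  "total_cost cost P ax = (\<Sum>A\<leftarrow>P. cost A ax)"

definition induced_by :: "('a::finite set list \<Rightarrow> 'a list set) \<Rightarrow> ('a set \<Rightarrow> 'a list \<Rightarrow> real) \<Rightarrow> bool" where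
  "induced_by f cost \<longleftrightarrow>
     (\<forall>A ax. ballot A \<longrightarrow> ax \<in> axes \<longrightarrow> cost A ax \<ge> 0) \<and>
     (\<forall>P. profile P \<longrightarrow>
        f P = {ax \<in> axes. \<forall>ax'\<in>axes. total_cost cost P ax \<le> total_cost cost P ax'})"

definition scoring_rule :: "('a::finite set list \<Rightarrow> 'a list set) \<Rightarrow> bool" where
  "scoring_rule f \<longleftrightarrow> axis_rule f \<and> (\<exists>cost. induced_by f cost)"

definition neutral :: "('a::finite set list \<Rightarrow> 'a list set) \<Rightarrow> bool" where
  "neutral f \<longleftrightarrow> (\<forall>\<pi> P. bij \<pi> \<longrightarrow> profile P \<longrightarrow>
      f (map (\<lambda>A. \<pi> ` A) P) = (map \<pi>) ` f P)"

definition consistent_with_linearity :: "('a::finite set list \<Rightarrow> 'a list set) \<Rightarrow> bool" where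
  "consistent_with_linearity f \<longleftrightarrow> (\<forall>P. profile P \<longrightarrow> linear_profile P \<longrightarrow> f P = con P)"

definition approval_vector :: "'a set \<Rightarrow> 'a list \<Rightarrow> bool list" where
  "approval_vector A ax = map (\<lambda>c. c \<in> A) ax"

end

theory Submission
  imports Defs
begin

definition amin :: "('a list \<Rightarrow> real) \<Rightarrow> ('a::finite) list set" where
  "amin h = {x\<in>axes. \<forall>y\<in>axes. h x \<le> h y}"

lemma axes_finite: "finite (axes :: ('a::finite) list set)"
proof -
  have "axes \<subseteq> {xs::'a list. set xs \<subseteq> UNIV \<and> length xs \<le> card (UNIV::'a set)}"
    by (auto simp: axes_def dest: distinct_card[symmetric])
  then show ?thesis by (rule finite_subset) (rule finite_lists_length_le, simp)
qed

lemma axes_nonempty: "axes \<noteq> ({} :: ('a::finite) list set)"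
  using finite_distinct_list[of "UNIV::'a set"] by (auto simp: axes_def)

lemma axes_map: "bij \<pi> \<Longrightarrow> ax \<in> axes \<Longrightarrow> map \<pi> ax \<in> axes"
  by (auto simp: axes_def distinct_map bij_is_inj bij_is_surj inj_on_subset)

lemma axes_rev: "ax \<in> axes \<Longrightarrow> rev ax \<in> axes"
  by (auto simp: axes_def)

lemma axes_map_image: "bij (\<pi>::'a::finite\<Rightarrow>'a) \<Longrightarrow> map \<pi> ` axes = axes"
proof
  assume b: "bij \<pi>"
  show "map \<pi> ` axes \<subseteq> axes" using axes_map[OF b] by auto
  show "axes \<subseteq> map \<pi> ` axes"
  proof
    fix ax :: "'a list" assume "ax \<in> axes"
    moreover have "bij (inv \<pi>)" using b by (simp add: bij_imp_bij_inv)
    ultimately have "map (inv \<pi>) ax \<in> axes" by (rule axes_map[rotated])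
    moreover have "ax = map \<pi> (map (inv \<pi>) ax)"
      using b by (simp add: bij_is_surj surj_f_inv_f map_idI)
    ultimately show "ax \<in> map \<pi> ` axes" by blast
  qed
qed

lemma amin_comp:
  assumes "T ` axes = axes"
  shows "amin (\<lambda>x. h (T x)) = {x\<in>axes. T x \<in> amin h}"
  using assms unfolding amin_def by (auto; metis image_eqI imageE)

lemma amin_sum:
  fixes h :: "'i \<Rightarrow> ('a::finite) list \<Rightarrow> real"
  assumes "finite I" "I \<noteq> {}" "M \<noteq> {}" "\<And>i. i \<in> I \<Longrightarrow> amin (h i) = M"
  shows "amin (\<lambda>x. \<Sum>i\<in>I. h i x) = M"
proof -
  obtain m where m: "m \<in> M" using assms(3) by auto
  obtain i0 where i0: "i0 \<in> I" using assms(2) by auto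
  have Max: "M \<subseteq> axes" using assms(4)[OF i0] by (auto simp: amin_def)
  show ?thesis
  proof (intro equalityI subsetI)
    fix x assume x: "x \<in> M"
    then have "\<And>i. i \<in> I \<Longrightarrow> x \<in> amin (h i)" using assms(4) by auto
    then show "x \<in> amin (\<lambda>x. \<Sum>i\<in>I. h i x)"
      using x Max unfolding amin_def by (auto intro!: sum_mono)
  next
    fix x assume x: "x \<in> amin (\<lambda>x. \<Sum>i\<in>I. h i x)"
    show "x \<in> M"
    proof (rule ccontr)
      assume nx: "x \<notin> M"
      have xa: "x \<in> axes" using x by (auto simp: amin_def)
      have mm: "\<And>i. i \<in> I \<Longrightarrow> m \<in> amin (h i)" using assms(4) m by auto
      have le: "\<And>i. i \<in> I \<Longrightarrow> h i m \<le> h i x" using mm xa by (auto simp: amin_def)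
      have "x \<notin> amin (h i0)" using nx assms(4)[OF i0] by auto
      then obtain y where "y \<in> axes" "h i0 y < h i0 x" using xa by (auto simp: amin_def not_le)
      moreover have "h i0 m \<le> h i0 y" using mm[OF i0] \<open>y \<in> axes\<close> by (auto simp: amin_def)
      ultimately have "h i0 m < h i0 x" by simp
      then have "(\<Sum>i\<in>I. h i m) < (\<Sum>i\<in>I. h i x)"
        using le i0 assms(1) by (intro sum_strict_mono_ex1) auto
      moreover have "m \<in> axes" using m Max by auto
      ultimately show False using x by (auto simp: amin_def not_le[symmetric])
    qed
  qed
qed

lemma total_cost_sum:
  "total_cost (\<lambda>A ax. \<Sum>p\<in>I. F p A ax) P ax = (\<Sum>p\<in>I. total_cost (F p) P ax)"
  by (induction P) (auto simp: total_cost_def sum.distrib)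

definition perms :: "('a \<Rightarrow> 'a) set" where "perms = {\<pi>. bij \<pi>}"
definition rv :: "bool \<Rightarrow> 'a list \<Rightarrow> 'a list" where "rv b ax = (if b then rev ax else ax)"
definition sym_cost :: "(('a::finite) set \<Rightarrow> 'a list \<Rightarrow> real) \<Rightarrow> 'a set \<Rightarrow> 'a list \<Rightarrow> real" where
  "sym_cost c A ax = (\<Sum>p\<in>perms \<times> (UNIV::bool set). c (fst p ` A) (map (fst p) (rv (snd p) ax)))"

lemma finite_perms: "finite (perms :: (('a::finite) \<Rightarrow> 'a) set)"
  by simp

lemma rv_axes: "rv b ` axes = axes"
proof -
  have "rev ` axes = axes"
    by (auto simp: image_iff intro!: axes_rev) (metis axes_rev rev_rev_ident)
  then show ?thesis by (auto simp: rv_def)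
qed

lemma T_axes: "bij (\<pi>::('a::finite)\<Rightarrow>'a) \<Longrightarrow> (\<lambda>x. map \<pi> (rv b x)) ` axes = axes"
proof -
  assume b: "bij \<pi>"
  have "(\<lambda>x. map \<pi> (rv b x)) ` axes = map \<pi> ` (rv b ` axes)" by (simp add: image_image)
  moreover have "rv b ` (axes::'a list set) = axes" by (rule rv_axes)
  ultimately show ?thesis using axes_map_image[OF b] by simp
qed

lemma induced_amin: "induced_by f c \<Longrightarrow> profile P \<Longrightarrow> f P = amin (total_cost c P)"
  by (simp add: induced_by_def amin_def)

lemma profile_map: "profile P \<Longrightarrow> profile (map ((`) \<pi>) P)"
  by (auto simp: profile_def ballot_def)

lemma tc_comp: "total_cost (\<lambda>A ax. c (\<pi> ` A) (T ax)) P ax = total_cost c (map ((`) \<pi>) P) (T ax)"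
  by (simp add: total_cost_def o_def)

lemma sym_cost_amin:
  fixes f :: "('a::finite) set list \<Rightarrow> 'a list set"
  assumes ind: "induced_by f c" and ar: "axis_rule f" and neu: "neutral f" and P: "profile P"
  shows "amin (total_cost (sym_cost c) P) = f P"
proof -
  let ?I = "(perms::('a\<Rightarrow>'a) set) \<times> (UNIV::bool set)"
  let ?h = "\<lambda>p ax. total_cost c (map ((`) (fst p)) P) (map (fst p) (rv (snd p) ax))"
  have eq: "total_cost (sym_cost c) P = (\<lambda>ax. \<Sum>p\<in>?I. ?h p ax)"
    unfolding sym_cost_def[abs_def]
    by (rule ext, subst total_cost_sum, rule sum.cong, simp, rule tc_comp)
  have fP: "f P \<noteq> {}" "f P \<subseteq> axes" "\<And>ax. ax \<in> f P \<Longrightarrow> rev ax \<in> f P"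
    using ar P by (auto simp: axis_rule_def)
  have "amin (\<lambda>x. \<Sum>p\<in>?I. ?h p x) = f P"
  proof (rule amin_sum)
    show "finite ?I" by (simp add: perms_def)
    show "?I \<noteq> {}" by (auto simp: perms_def)
    show "f P \<noteq> {}" by fact
    fix p assume "p \<in> ?I"
    then obtain \<pi> b where p: "p = (\<pi>, b)" "bij \<pi>" by (auto simp: perms_def)
    have "amin (?h p) = {x\<in>axes. map \<pi> (rv b x) \<in> amin (total_cost c (map ((`) \<pi>) P))}"
      using amin_comp[OF T_axes[OF p(2)], of "total_cost c (map ((`) \<pi>) P)" b] p by simp
    also have "amin (total_cost c (map ((`) \<pi>) P)) = map \<pi> ` f P"
      using induced_amin[OF ind profile_map[OF P]] neu p(2) P unfolding neutral_def by metis
    also have "{x\<in>axes. map \<pi> (rv b x) \<in> map \<pi> ` f P} = {x\<in>axes. rv b x \<in> f P}"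
      using inj_mapI[OF bij_is_inj[OF p(2)]] by (auto simp: inj_image_mem_iff)
    also have "\<dots> = f P"
      using fP by (auto simp: rv_def) (metis rev_rev_ident)
    finally show "amin (?h p) = f P" .
  qed
  then show ?thesis using eq by simp
qed

lemma sym_cost_perm:
  fixes \<sigma> :: "('a::finite) \<Rightarrow> 'a"
  assumes s: "bij \<sigma>"
  shows "sym_cost c (\<sigma> ` A) (map \<sigma> ax) = sym_cost c A ax"
proof -
  have si: "\<sigma> \<circ> inv \<sigma> = id" "inv \<sigma> \<circ> \<sigma> = id"
    using s by (simp_all add: bij_is_surj bij_is_inj surj_iff[THEN iffD1] inj_iff[THEN iffD1])
  have bi: "bij (inv \<sigma>)" using s by (simp add: bij_imp_bij_inv)
  show ?thesis
  unfolding sym_cost_def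
  apply (rule sum.reindex_bij_witness[where j = "\<lambda>p. (fst p \<circ> \<sigma>, snd p)" and i = "\<lambda>p. (fst p \<circ> inv \<sigma>, snd p)"])
  using si bi s by (auto simp: perms_def comp_assoc rv_def image_comp rev_map intro: bij_comp)
qed

lemma sym_cost_rev: "sym_cost c A (rev ax) = sym_cost c A ax"
  unfolding sym_cost_def
  by (rule sum.reindex_bij_witness[where j = "\<lambda>p. (fst p, \<not> snd p)" and i = "\<lambda>p. (fst p, \<not> snd p)"])
     (auto simp: rv_def)

definition norm_cost :: "(('a::finite) set \<Rightarrow> 'a list \<Rightarrow> real) \<Rightarrow> 'a set \<Rightarrow> 'a list \<Rightarrow> real" where
  "norm_cost c A ax = sym_cost c A ax - Min (sym_cost c A ` axes)"

lemma norm_cost_perm: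
  fixes \<sigma> :: "('a::finite) \<Rightarrow> 'a"
  assumes s: "bij \<sigma>"
  shows "norm_cost c (\<sigma> ` A) (map \<sigma> ax) = norm_cost c A ax"
proof -
  have "sym_cost c (\<sigma> ` A) ` axes = sym_cost c (\<sigma> ` A) ` map \<sigma> ` axes"
    using axes_map_image[OF s] by simp
  also have "\<dots> = sym_cost c A ` axes"
    by (simp add: image_comp o_def sym_cost_perm[OF s])
  finally show ?thesis by (simp add: norm_cost_def sym_cost_perm[OF s])
qed

lemma norm_cost_rev: "norm_cost c A (rev ax) = norm_cost c A ax"
  by (simp add: norm_cost_def sym_cost_rev)

lemma norm_cost_nonneg: "ax \<in> axes \<Longrightarrow> norm_cost c A ax \<ge> 0"
  by (simp add: norm_cost_def axes_finite)

lemma norm_cost_zero: "ax \<in> axes \<Longrightarrow> norm_cost c A ax = 0 \<longleftrightarrow> ax \<in> amin (sym_cost c A)"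
proof -
  assume ax: "ax \<in> axes"
  have "Min (sym_cost c A ` axes) \<in> sym_cost c A ` axes"
    by (rule Min_in) (simp_all add: axes_finite axes_nonempty)
  moreover have "\<forall>y\<in>axes. Min (sym_cost c A ` axes) \<le> sym_cost c A y"
    by (simp add: axes_finite)
  ultimately show ?thesis using ax
    by (auto simp: norm_cost_def amin_def intro!: antisym)
qed

lemma approval_perm:
  fixes ax bx :: "('a::finite) list"
  assumes ax: "ax \<in> axes" and bx: "bx \<in> axes" and eq: "approval_vector A ax = approval_vector B bx"
  shows "\<exists>\<sigma>. bij \<sigma> \<and> map \<sigma> ax = bx \<and> \<sigma> ` A = B"
proof -
  have len: "length ax = length bx"
    using ax bx by (auto simp: axes_def dest!: distinct_card)
  have dax: "distinct ax" "set ax = UNIV" and dbx: "distinct bx" "set bx = UNIV"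
    using ax bx by (auto simp: axes_def)
  define \<sigma> where "\<sigma> c = the (map_of (zip ax bx) c)" for c
  have sn: "\<sigma> (ax ! i) = bx ! i" if "i < length ax" for i
    using map_of_zip_nth[OF len dax(1)] that len by (simp add: \<sigma>_def)
  have AB: "ax ! i \<in> A \<longleftrightarrow> bx ! i \<in> B" if "i < length ax" for i
  proof -
    have "approval_vector A ax ! i = approval_vector B bx ! i" using eq by simp
    then show ?thesis using that len by (simp add: approval_vector_def)
  qed
  have ex: "\<exists>i<length ax. c = ax ! i" for c
    using dax(2) by (metis UNIV_I in_set_conv_nth)
  have "inj \<sigma>"
  proof (rule injI)
    fix c d assume "\<sigma> c = \<sigma> d"
    moreover obtain i where i: "i < length ax" "c = ax ! i" using ex by blast
    moreover obtain j where j: "j < length ax" "d = ax ! j" using ex by blast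
    ultimately have "bx ! i = bx ! j" using sn by simp
    then have "i = j" using nth_eq_iff_index_eq[OF dbx(1)] i j len by simp
    then show "c = d" using i j by simp
  qed
  then have bij: "bij \<sigma>" by (simp add: bij_def finite_UNIV_inj_surj)
  have mp: "map \<sigma> ax = bx"
    by (rule nth_equalityI) (simp_all add: len sn)
  have img: "\<sigma> ` A = B"
  proof (intro equalityI subsetI)
    fix y assume "y \<in> \<sigma> ` A"
    then obtain c where c: "c \<in> A" "y = \<sigma> c" by auto
    obtain i where i: "i < length ax" "c = ax ! i" using ex by blast
    show "y \<in> B" using AB[OF i(1)] c i sn by simp
  next
    fix y assume y: "y \<in> B"
    obtain i where i: "i < length bx" "y = bx ! i" using dbx(2) by (metis UNIV_I in_set_conv_nth)
    then have "ax ! i \<in> A" using AB len y by simp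
    then show "y \<in> \<sigma> ` A" using sn i len by (metis image_eqI)
  qed
  show ?thesis using bij mp img by blast
qed

lemma interval_exists:
  fixes A :: "('a::finite) set"
  shows "\<exists>ax\<in>axes. is_interval A ax"
proof -
  obtain xs where xs: "set xs = A" "distinct xs" using finite_distinct_list[of A] by auto
  obtain ys where ys: "set ys = - A" "distinct ys" using finite_distinct_list[of "- A"] by auto
  let ?ax = "xs @ ys"
  have "?ax \<in> axes" using xs ys by (auto simp: axes_def)
  moreover have "is_interval A ?ax"
    unfolding is_interval_def before_def
  proof (intro ballI allI impI)
    fix a b c assume "a \<in> A" "b \<in> A" and h: "(\<exists>i j. i < j \<and> j < length ?ax \<and> ?ax ! i = a \<and> ?ax ! j = c) \<and>
       (\<exists>i j. i < j \<and> j < length ?ax \<and> ?ax ! i = c \<and> ?ax ! j = b)"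
    then obtain i j where ij: "i < j" "j < length ?ax" "?ax ! i = c" "?ax ! j = b" by blast
    have "j < length xs"
    proof (rule ccontr)
      assume "\<not> j < length xs"
      then have "?ax ! j = ys ! (j - length xs)" by (simp add: nth_append)
      moreover have "j - length xs < length ys" using ij \<open>\<not> j < length xs\<close> by simp
      ultimately have "b \<in> - A" using ys ij by (metis nth_mem)
      then show False using \<open>b \<in> A\<close> by simp
    qed
    then have "?ax ! i = xs ! i" "i < length xs" using ij by (simp_all add: nth_append)
    then show "c \<in> A" using ij xs by (metis nth_mem)
  qed
  ultimately show ?thesis by blast
qed

lemma tc_shift: "total_cost (\<lambda>A ax. F A ax - G A) P ax = total_cost F P ax - sum_list (map G P)"
  by (induction P) (auto simp: total_cost_def)

lemma amin_shift: "amin (\<lambda>x. h x - (K::real)) = amin h"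
  by (simp add: amin_def)

lemma amin_cong: "(\<And>x. x \<in> axes \<Longrightarrow> h x = h' x) \<Longrightarrow> amin h = amin h'"
  unfolding amin_def by force

lemma amin_sub: "amin h \<subseteq> axes"
  by (auto simp: amin_def)

lemma tc_single: "total_cost c [A] ax = c A ax"
  by (simp add: total_cost_def)

lemma forward:
  fixes f :: "('a::finite) set list \<Rightarrow> 'a list set"
  assumes ar: "axis_rule f" and ind: "induced_by f c0" and neu: "neutral f"
    and cwl: "consistent_with_linearity f"
  shows "\<exists>cost. induced_by f cost \<and>
       (\<forall>A ax. ballot A \<longrightarrow> ax \<in> axes \<longrightarrow>
          cost A ax \<ge> 0 \<and> (cost A ax = 0 \<longleftrightarrow> is_interval A ax)) \<and>
       (\<forall>A ax. ballot A \<longrightarrow> ax \<in> axes \<longrightarrow> cost A ax = cost A (rev ax)) \<and>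
       (\<exists>g :: bool list \<Rightarrow> real.
          (\<forall>x. length x = card (UNIV :: 'a set) \<longrightarrow> g x \<ge> 0) \<and>
          (\<forall>A ax. ballot A \<longrightarrow> ax \<in> axes \<longrightarrow>
             cost A ax = g (approval_vector A ax) \<and>
             cost A ax = g (approval_vector A (rev ax))))"
proof -
  let ?c = "norm_cost c0"
  have symP: "amin (total_cost (sym_cost c0) P) = f P" if "profile P" for P
    by (rule sym_cost_amin[OF ind ar neu that])
  have indc: "induced_by f ?c"
    unfolding induced_by_def
  proof (intro conjI allI impI)
    fix A ax assume "ax \<in> (axes::'a list set)" then show "?c A ax \<ge> 0" by (rule norm_cost_nonneg)
  next
    fix P :: "'a set list" assume P: "profile P"
    have "total_cost ?c P = (\<lambda>ax. total_cost (sym_cost c0) P ax - sum_list (map (\<lambda>A. Min (sym_cost c0 A ` axes)) P))"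
      unfolding norm_cost_def[abs_def] by (rule ext, rule tc_shift)
    then have "amin (total_cost ?c P) = f P" using symP[OF P] by (simp add: amin_shift)
    then show "f P = {ax \<in> axes. \<forall>ax'\<in>axes. total_cost ?c P ax \<le> total_cost ?c P ax'}"
      by (simp add: amin_def)
  qed
  have zero: "?c A ax = 0 \<longleftrightarrow> is_interval A ax" if A: "ballot A" and ax: "ax \<in> axes" for A ax
  proof -
    have P: "profile [A]" using A by (simp add: profile_def)
    have "linear_profile [A]" using interval_exists[of A] by (auto simp: linear_profile_def con_def)
    then have "f [A] = con [A]" using cwl P by (simp add: consistent_with_linearity_def)
    moreover have "f [A] = amin (sym_cost c0 A)" using symP[OF P] by (simp add: tc_single[abs_def])
    ultimately show ?thesis using norm_cost_zero[OF ax] ax by (auto simp: con_def)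
  qed
  define Q where "Q x = (\<lambda>p::'a set \<times> 'a list. ballot (fst p) \<and> snd p \<in> axes \<and> approval_vector (fst p) (snd p) = x)" for x
  define g where "g x = (if \<exists>p. Q x p then ?c (fst (SOME p. Q x p)) (snd (SOME p. Q x p)) else 0)" for x
  have gc: "g (approval_vector A ax) = ?c A ax" if A: "ballot A" and ax: "ax \<in> axes" for A ax
  proof -
    let ?x = "approval_vector A ax"
    have ex: "Q ?x (A, ax)" using A ax by (simp add: Q_def)
    then have q: "Q ?x (SOME p. Q ?x p)" by (rule someI)
    obtain B bx where Bb: "(SOME p. Q ?x p) = (B, bx)" by fastforce
    have "bx \<in> axes" "approval_vector A ax = approval_vector B bx" using q Bb by (auto simp: Q_def)
    then obtain \<sigma> where s: "bij \<sigma>" "map \<sigma> ax = bx" "\<sigma> ` A = B" using approval_perm[OF ax] by blast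
    have "g ?x = ?c B bx" using ex Bb by (auto simp: g_def)
    also have "\<dots> = ?c A ax" using norm_cost_perm[OF s(1)] s by metis
    finally show ?thesis .
  qed
  have gnn: "g x \<ge> 0" for x
  proof (cases "\<exists>p. Q x p")
    case True
    then have "Q x (SOME p. Q x p)" by (rule someI_ex)
    then show ?thesis using True by (simp add: g_def Q_def norm_cost_nonneg)
  qed (simp add: g_def)
  show ?thesis
  proof (intro exI[of _ ?c] conjI allI impI)
    show "induced_by f ?c" by (rule indc)
    fix A :: "'a set" and ax :: "'a list" assume A: "ballot A" and ax: "ax \<in> axes"
    show "?c A ax \<ge> 0" using ax by (rule norm_cost_nonneg)
    show "?c A ax = 0 \<longleftrightarrow> is_interval A ax" using zero[OF A ax] .
    show "?c A ax = ?c A (rev ax)" by (simp add: norm_cost_rev)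
  next
    show "\<exists>g :: bool list \<Rightarrow> real.
          (\<forall>x. length x = card (UNIV :: 'a set) \<longrightarrow> g x \<ge> 0) \<and>
          (\<forall>A ax. ballot A \<longrightarrow> ax \<in> axes \<longrightarrow>
             ?c A ax = g (approval_vector A ax) \<and>
             ?c A ax = g (approval_vector A (rev ax)))"
    proof (intro exI[of _ g] conjI allI impI)
      fix A :: "'a set" and ax :: "'a list" assume A: "ballot A" and ax: "ax \<in> axes"
      show "?c A ax = g (approval_vector A ax)" using gc[OF A ax] by simp
      have "g (approval_vector A (rev ax)) = ?c A (rev ax)" using gc[OF A axes_rev[OF ax]] .
      then show "?c A ax = g (approval_vector A (rev ax))" by (simp add: norm_cost_rev)
    qed (simp add: gnn)
  qed
qed

lemma backward:
  fixes f :: "('a::finite) set list \<Rightarrow> 'a list set"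
  assumes ind: "induced_by f cost"
    and z: "\<forall>A ax. ballot A \<longrightarrow> ax \<in> axes \<longrightarrow>
          cost A ax \<ge> 0 \<and> (cost A ax = 0 \<longleftrightarrow> is_interval A ax)"
    and gg: "\<forall>A ax. ballot A \<longrightarrow> ax \<in> axes \<longrightarrow> cost A ax = g (approval_vector A ax)"
  shows "neutral f \<and> consistent_with_linearity f"
proof
  show "neutral f"
    unfolding neutral_def
  proof (intro allI impI)
    fix \<pi> :: "'a \<Rightarrow> 'a" and P :: "'a set list" assume b: "bij \<pi>" and P: "profile P"
    let ?Q = "map ((`) \<pi>) P"
    have Q: "profile ?Q" using P by (rule profile_map)
    have inv: "cost (\<pi> ` A) (map \<pi> ax) = cost A ax" if A: "ballot A" and ax: "ax \<in> axes" for A ax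
    proof -
      have "approval_vector (\<pi> ` A) (map \<pi> ax) = approval_vector A ax"
        using bij_is_inj[OF b] by (simp add: approval_vector_def inj_image_mem_iff)
      moreover have "ballot (\<pi> ` A)" using A by (simp add: ballot_def)
      ultimately show ?thesis using gg A ax axes_map[OF b ax] by metis
    qed
    have tc: "total_cost cost ?Q (map \<pi> ax) = total_cost cost P ax" if ax: "ax \<in> axes" for ax
    proof -
      have "map (\<lambda>A. cost (\<pi> ` A) (map \<pi> ax)) P = map (\<lambda>A. cost A ax) P"
        using P inv ax by (auto simp: profile_def)
      then show ?thesis unfolding total_cost_def by (simp only: map_map o_def)
    qed
    have "f P = amin (total_cost cost P)" by (rule induced_amin[OF ind P])
    also have "\<dots> = amin (\<lambda>ax. total_cost cost ?Q (map \<pi> ax))"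
      by (rule amin_cong) (simp add: tc)
    also have "\<dots> = {x\<in>axes. map \<pi> x \<in> amin (total_cost cost ?Q)}"
      by (rule amin_comp[OF axes_map_image[OF b]])
    also have "amin (total_cost cost ?Q) = f ?Q" by (rule induced_amin[OF ind Q, symmetric])
    finally have fP: "f P = {x\<in>axes. map \<pi> x \<in> f ?Q}" .
    have sub: "f ?Q \<subseteq> axes" using induced_amin[OF ind Q] amin_sub by metis
    show "f ?Q = map \<pi> ` f P"
    proof (intro equalityI subsetI)
      fix y assume y: "y \<in> f ?Q"
      then have "y \<in> map \<pi> ` axes" using sub axes_map_image[OF b] by auto
      then obtain x where "x \<in> axes" "y = map \<pi> x" by auto
      then show "y \<in> map \<pi> ` f P" using fP y by auto
    next
      fix y assume "y \<in> map \<pi> ` f P"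
      then show "y \<in> f ?Q" using fP by auto
    qed
  qed
next
  show "consistent_with_linearity f"
    unfolding consistent_with_linearity_def
  proof (intro allI impI)
    fix P :: "'a set list" assume P: "profile P" and lin: "linear_profile P"
    have nn: "total_cost cost P ax \<ge> 0" if "ax \<in> axes" for ax
      using P z that by (auto simp: total_cost_def profile_def intro!: sum_list_nonneg)
    have zz: "total_cost cost P ax = 0 \<longleftrightarrow> ax \<in> con P" if ax: "ax \<in> axes" for ax
    proof -
      have "total_cost cost P ax = 0 \<longleftrightarrow> (\<forall>A\<in>set P. cost A ax = 0)"
        unfolding total_cost_def
        by (subst sum_list_nonneg_eq_0_iff) (use P z ax in \<open>auto simp: profile_def\<close>)
      also have "\<dots> \<longleftrightarrow> ax \<in> con P" using P z ax by (auto simp: con_def profile_def)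
      finally show ?thesis .
    qed
    obtain z0 where z0: "z0 \<in> con P" using lin by (auto simp: linear_profile_def)
    have z0a: "z0 \<in> axes" using z0 by (simp add: con_def)
    have "amin (total_cost cost P) = con P"
    proof (intro equalityI subsetI)
      fix x assume x: "x \<in> amin (total_cost cost P)"
      then have "x \<in> axes" "total_cost cost P x \<le> total_cost cost P z0" using z0a by (auto simp: amin_def)
      then show "x \<in> con P" using zz nn z0 z0a by (metis antisym)
    next
      fix x assume x: "x \<in> con P"
      then have "x \<in> axes" by (simp add: con_def)
      then have "total_cost cost P x = 0" using zz x by simp
      then show "x \<in> amin (total_cost cost P)" using nn \<open>x \<in> axes\<close> by (auto simp: amin_def)
    qed
    then show "f P = con P" using induced_amin[OF ind P] by simp
  qed
qed

theorem mainTheorem4: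
  fixes f :: "'a::finite set list \<Rightarrow> 'a list set"
  assumes "scoring_rule f"
  shows "(neutral f \<and> consistent_with_linearity f) \<longleftrightarrow>
    (\<exists>cost. induced_by f cost \<and>
       (\<forall>A ax. ballot A \<longrightarrow> ax \<in> axes \<longrightarrow>
          cost A ax \<ge> 0 \<and> (cost A ax = 0 \<longleftrightarrow> is_interval A ax)) \<and>
       (\<forall>A ax. ballot A \<longrightarrow> ax \<in> axes \<longrightarrow> cost A ax = cost A (rev ax)) \<and>
       (\<exists>g :: bool list \<Rightarrow> real.
          (\<forall>x. length x = card (UNIV :: 'a set) \<longrightarrow> g x \<ge> 0) \<and>
          (\<forall>A ax. ballot A \<longrightarrow> ax \<in> axes \<longrightarrow>
             cost A ax = g (approval_vector A ax) \<and>
             cost A ax = g (approval_vector A (rev ax)))))"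
proof
  assume h: "neutral f \<and> consistent_with_linearity f"
  obtain c0 where "axis_rule f" "induced_by f c0" using assms by (auto simp: scoring_rule_def)
  then show "\<exists>cost. induced_by f cost \<and>
       (\<forall>A ax. ballot A \<longrightarrow> ax \<in> axes \<longrightarrow>
          cost A ax \<ge> 0 \<and> (cost A ax = 0 \<longleftrightarrow> is_interval A ax)) \<and>
       (\<forall>A ax. ballot A \<longrightarrow> ax \<in> axes \<longrightarrow> cost A ax = cost A (rev ax)) \<and>
       (\<exists>g :: bool list \<Rightarrow> real.
          (\<forall>x. length x = card (UNIV :: 'a set) \<longrightarrow> g x \<ge> 0) \<and>
          (\<forall>A ax. ballot A \<longrightarrow> ax \<in> axes \<longrightarrow>
             cost A ax = g (approval_vector A ax) \<and>
             cost A ax = g (approval_vector A (rev ax))))"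
    using forward h by blast
next
  assume "\<exists>cost. induced_by f cost \<and>
       (\<forall>A ax. ballot A \<longrightarrow> ax \<in> axes \<longrightarrow>
          cost A ax \<ge> 0 \<and> (cost A ax = 0 \<longleftrightarrow> is_interval A ax)) \<and>
       (\<forall>A ax. ballot A \<longrightarrow> ax \<in> axes \<longrightarrow> cost A ax = cost A (rev ax)) \<and>
       (\<exists>g :: bool list \<Rightarrow> real.
          (\<forall>x. length x = card (UNIV :: 'a set) \<longrightarrow> g x \<ge> 0) \<and>
          (\<forall>A ax. ballot A \<longrightarrow> ax \<in> axes \<longrightarrow>
             cost A ax = g (approval_vector A ax) \<and>
             cost A ax = g (approval_vector A (rev ax))))"
  then obtain cost g where "induced_by f cost"
    "\<forall>A ax. ballot A \<longrightarrow> ax \<in> axes \<longrightarrow>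
          cost A ax \<ge> 0 \<and> (cost A ax = 0 \<longleftrightarrow> is_interval A ax)"
    "\<forall>A ax. ballot A \<longrightarrow> ax \<in> axes \<longrightarrow> cost A ax = g (approval_vector A ax)"
    by blast
  then show "neutral f \<and> consistent_with_linearity f" by (rule backward)
qed

end
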